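(* For any integers $p\geq3$, $k\geq1$, there exists $\lambda^{(2)}=\lambda^{(2)}(p,k)>0$ such that, for every $\lambda>0$ for which $m_*(\lambda)$ is defined, $m_*(\lambda)<m_\lambda$ if $\lambda<\lambda^{(2)}$ and $m_*(\lambda)\geq m_\lambda$ if $\lambda\geq\lambda^{(2)}$.
   Context: For $\lambda>0$: $m_\lambda=\min\left\{1,\left(\frac{(p-2)\sqrt p}{\lambda\sqrt{p-1}}\right)^{1/k}\right\}$, and $m_*(\lambda)$ is the largest solution $m\in(0,1]$ of $\frac{\lambda m^k}{\sqrt p}=\frac{m^2}{\sqrt{1-m^2}}$ (when such a solution exists). *)

theory Defs
  imports Complex_Main
begin

definition m_lam :: "nat \<Rightarrow> nat \<Rightarrow> real \<Rightarrow> real" where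
  "m_lam p k lam = min 1
     ((((real p - 2) * sqrt (real p)) / (lam * sqrt (real p - 1))) powr (1 / real k))"

text \<open>Solutions m in (0,1] of  lambda m^k / sqrt p = m^2 / sqrt(1 - m^2).
  The right-hand side is undefined (infinite) at m = 1, so m = 1 is never a solution;
  we therefore restrict to 0 < m < 1.\<close>
definition mstar_sols :: "nat \<Rightarrow> nat \<Rightarrow> real \<Rightarrow> real set" where
  "mstar_sols p k lam = {m. 0 < m \<and> m < 1 \<and>
      lam * m ^ k / sqrt (real p) = m ^ 2 / sqrt (1 - m ^ 2)}"

definition mstar_defined :: "nat \<Rightarrow> nat \<Rightarrow> real \<Rightarrow> bool" where
  "mstar_defined p k lam =
     (\<exists>m \<in> mstar_sols p k lam. \<forall>m' \<in> mstar_sols p k lam. m' \<le> m)"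

definition mstar :: "nat \<Rightarrow> nat \<Rightarrow> real \<Rightarrow> real" where
  "mstar p k lam = (GREATEST m. m \<in> mstar_sols p k lam)"

end

theory Submission
  imports Defs
begin


lemma h_deriv:
  fixes j :: nat and x :: real
  assumes "j \<ge> 1"
  shows "((\<lambda>x. x ^ j * (1 - x)) has_real_derivative (x ^ (j - 1) * (real j - (real j + 1) * x))) (at x)"
proof -
  have "((\<lambda>x. x ^ j * (1 - x)) has_real_derivative (real j * x ^ (j - 1) * (1 - x) + x ^ j * (0 - 1))) (at x)"
    by (intro derivative_eq_intros) auto
  moreover have "real j * x ^ (j - 1) * (1 - x) + x ^ j * (0 - 1) = x ^ (j - 1) * (real j - (real j + 1) * x)"
  proof -
    have "x ^ j = x * x ^ (j - 1)" using assms by (metis One_nat_def Suc_pred less_eq_Suc_le power_Suc)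
    then show "real j * x ^ (j - 1) * (1 - x) + x ^ j * (0 - 1) = x ^ (j - 1) * (real j - (real j + 1) * x)" by (simp add: algebra_simps)
  qed
  ultimately show ?thesis by simp
qed

lemma h_max:
  fixes j :: nat and x :: real
  assumes "j \<ge> 1" "0 \<le> x" "x \<le> 1"
  shows "x ^ j * (1 - x) \<le> (real j / (real j + 1)) ^ j * (1 - real j / (real j + 1))"
proof (cases "x \<le> real j / (real j + 1)")
  case True
  show ?thesis
  proof (rule DERIV_nonneg_imp_nondecreasing[OF True])
    fix t assume t: "x \<le> t" "t \<le> real j / (real j + 1)"
    have "0 \<le> t" using t assms by simp
    moreover have "(real j + 1) * t \<le> real j" using t by (simp add: field_simps)
    ultimately have "0 \<le> t ^ (j - 1) * (real j - (real j + 1) * t)" by simp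
    then show "\<exists>y. ((\<lambda>x. x ^ j * (1 - x)) has_real_derivative y) (at t) \<and> 0 \<le> y"
      using h_deriv[OF assms(1)] by blast
  qed
next
  case False
  have le: "real j / (real j + 1) \<le> x" using False by simp
  show ?thesis
  proof (rule DERIV_nonpos_imp_nonincreasing[OF le])
    fix t assume t: "real j / (real j + 1) \<le> t" "t \<le> x"
    have "0 \<le> t" using t by (smt (verit) divide_nonneg_nonneg of_nat_0_le_iff)
    moreover have "(real j + 1) * t \<ge> real j" using t by (simp add: field_simps)
    ultimately have "t ^ (j - 1) * (real j - (real j + 1) * t) \<le> 0"
      by (simp add: mult_nonneg_nonpos)
    then show "\<exists>y. ((\<lambda>x. x ^ j * (1 - x)) has_real_derivative y) (at t) \<and> y \<le> 0"
      using h_deriv[OF assms(1)] by blast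
  qed
qed

lemma h_dec:
  fixes j :: nat and x y :: real
  assumes "j \<ge> 1" "real j / (real j + 1) \<le> y" "y \<le> x"
  shows "x ^ j * (1 - x) \<le> y ^ j * (1 - y)"
proof (rule DERIV_nonpos_imp_nonincreasing[OF assms(3)])
    fix t assume t: "y \<le> t" "t \<le> x"
    have "0 \<le> t" using t assms by (smt (verit) divide_nonneg_nonneg of_nat_0_le_iff)
    moreover have "(real j + 1) * t \<ge> real j"
    proof -
      have "real j \<le> (real j + 1) * y" using assms(2) by (simp add: field_simps)
      also have "\<dots> \<le> (real j + 1) * t" using t by (intro mult_left_mono) auto
      finally show ?thesis .
    qed
    ultimately have "t ^ (j - 1) * (real j - (real j + 1) * t) \<le> 0"
      by (simp add: mult_nonneg_nonpos)
    then show "\<exists>y. ((\<lambda>x. x ^ j * (1 - x)) has_real_derivative y) (at t) \<and> y \<le> 0"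
      using h_deriv[OF assms(1)] by blast
qed



lemma Q_le:
  fixes p k :: nat and x :: real
  assumes p: "p \<ge> 3" and k: "k \<ge> 1" and x0: "(real p - 2) / (real p - 1) \<le> x" and x1: "x < 1"
    and y: "y = (real (max p k) - 2) / (real (max p k) - 1)"
  shows "y ^ 2 / ((1 - y) * y ^ k) \<le> x ^ 2 / ((1 - x) * x ^ k)"
proof -
  have x0pos: "(real p - 2) / (real p - 1) > 0" using p by simp
  have xpos: "x > 0" using x0 x0pos by linarith
  show ?thesis
  proof (cases "k \<le> 2")
    case True
    then have q: "max p k = p" using p by simp
    then have yx: "y \<le> x" using y x0 by simp
    have ypos: "y > 0" using y q x0pos by simp
    have y1: "y < 1" using yx x1 by simp
    show ?thesis
    proof (cases "k = 1")
      case True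
      have "y / (1 - y) \<le> x / (1 - x)" using yx x1 y1 ypos by (simp add: divide_simps algebra_simps)
      then show ?thesis using True xpos ypos by (simp add: power2_eq_square)
    next
      case False
      then have "k = 2" using \<open>k \<le> 2\<close> k by simp
      have "1 / (1 - y) \<le> 1 / (1 - x)" using yx x1 y1 by (simp add: divide_simps)
      then show ?thesis using \<open>k = 2\<close> xpos ypos by simp
    qed
  next
    case False
    define j where "j = k - 2"
    have j1: "j \<ge> 1" using False j_def by simp
    have kj: "k = j + 2" using False j_def by simp
    have rj: "real j = real k - 2" using kj by simp
    have q3: "real (max p k) \<ge> 3" using p by simp
    have yr: "\<And>r::real. r \<ge> 3 \<Longrightarrow> (r - 2) / (r - 1) > 0 \<and> (r - 2) / (r - 1) < 1"
      by (simp add: divide_simps)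
    have ypos: "y > 0" using y yr[OF q3] by simp
    have y1: "y < 1" using y yr[OF q3] by simp
    have key: "x ^ j * (1 - x) \<le> y ^ j * (1 - y)"
    proof (cases "k \<le> p")
      case True
      then have q: "max p k = p" by simp
      have yx: "y \<le> x" using y x0 q by simp
      have "real j / (real j + 1) \<le> y"
      proof -
        have "real j / (real j + 1) = (real k - 2) / (real k - 1)" using rj by simp
        also have "\<dots> \<le> (real p - 2) / (real p - 1)"
          using True k p False by (simp add: divide_simps algebra_simps)
        finally show ?thesis using y q by simp
      qed
      then show ?thesis using h_dec[OF j1 _ yx] by simp
    next
      case False
      then have q: "max p k = k" by simp
      have "y = real j / (real j + 1)" using y q rj by simp
      then show ?thesis using h_max[OF j1, of x] xpos x1 by simp
    qed
    have e1: "x ^ 2 / ((1 - x) * x ^ k) = 1 / (x ^ j * (1 - x))"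
      using xpos x1 kj by (simp add: power_add power2_eq_square field_simps)
    have e2: "y ^ 2 / ((1 - y) * y ^ k) = 1 / (y ^ j * (1 - y))"
      using ypos y1 kj by (simp add: power_add power2_eq_square field_simps)
    have "0 < x ^ j * (1 - x)" using xpos x1 by simp
    then show ?thesis unfolding e1 e2 using key by (simp add: frac_le)
  qed
qed



lemma G_sq:
  fixes m :: real assumes "0 < m" "m < 1"
  shows "m ^ 2 / sqrt (1 - m ^ 2) / m ^ k = sqrt ((m ^ 2) ^ 2 / ((1 - m ^ 2) * (m ^ 2) ^ k))"
proof -
  have a: "sqrt ((m ^ 2) ^ 2) = m ^ 2" using real_sqrt_abs[of "m ^ 2"] by simp
  have b: "sqrt ((m ^ 2) ^ k) = m ^ k"
  proof -
    have "(m ^ 2) ^ k = (m ^ k) ^ 2" by (simp add: power_mult[symmetric] mult.commute)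
    then show ?thesis using assms by simp
  qed
  have "sqrt ((m ^ 2) ^ 2 / ((1 - m ^ 2) * (m ^ 2) ^ k)) = sqrt ((m ^ 2) ^ 2) / (sqrt (1 - m ^ 2) * sqrt ((m ^ 2) ^ k))"
    by (simp only: real_sqrt_divide real_sqrt_mult)
  then show ?thesis unfolding a b by (simp add: divide_divide_eq_left)
qed

lemma sq_mono:
  fixes a b :: real assumes "0 \<le> a" "a < b" "b < 1"
  shows "a ^ 2 / (1 - a) < b ^ 2 / (1 - b)"
proof -
  have "a ^ 2 / (1 - a) \<le> a ^ 2 / (1 - b)" using assms by (intro divide_left_mono) auto
  also have "\<dots> < b ^ 2 / (1 - b)" using assms by (intro divide_strict_right_mono power_strict_mono) auto
  finally show ?thesis .
qed

lemma Cthr: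
  fixes p :: nat and m :: real
  assumes p: "p \<ge> 3" and m: "0 < m" "m < 1"
  shows "((real p - 2) * sqrt (real p) / sqrt (real p - 1) \<le> sqrt (real p) * (m ^ 2 / sqrt (1 - m ^ 2)))
     \<longleftrightarrow> (real p - 2) / (real p - 1) \<le> m ^ 2"
proof -
  define x0 where "x0 = (real p - 2) / (real p - 1)"
  have x0: "0 \<le> x0" "x0 < 1" using p by (auto simp: x0_def divide_simps)
  have sp: "sqrt (real p) > 0" using p by simp
  have s1: "((real p - 2) * sqrt (real p) / sqrt (real p - 1) \<le> sqrt (real p) * (m ^ 2 / sqrt (1 - m ^ 2)))
     \<longleftrightarrow> (real p - 2) / sqrt (real p - 1) \<le> m ^ 2 / sqrt (1 - m ^ 2)"
  proof -
    have "(real p - 2) * sqrt (real p) / sqrt (real p - 1) = sqrt (real p) * ((real p - 2) / sqrt (real p - 1))"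
      by simp
    then show ?thesis using mult_le_cancel_left_pos[OF sp] by presburger
  qed
  have s2: "(real p - 2) / sqrt (real p - 1) = sqrt (x0 ^ 2 / (1 - x0))"
  proof -
    have "1 - x0 = 1 / (real p - 1)" using p by (simp add: x0_def field_simps)
    then have "x0 ^ 2 / (1 - x0) = x0 ^ 2 * (real p - 1)" by simp
    also have "\<dots> = (real p - 2) ^ 2 / (real p - 1)"
      using p by (simp add: x0_def power_divide power2_eq_square)
    finally have "x0 ^ 2 / (1 - x0) = (real p - 2) ^ 2 / (real p - 1)" .
    then show ?thesis using p by (simp add: real_sqrt_divide)
  qed
  have s3: "m ^ 2 / sqrt (1 - m ^ 2) = sqrt ((m ^ 2) ^ 2 / (1 - m ^ 2))"
  proof -
    have a: "sqrt ((m ^ 2) ^ 2) = m ^ 2" using real_sqrt_abs[of "m ^ 2"] by simp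
    show ?thesis by (simp only: real_sqrt_divide a)
  qed
  have s4: "(sqrt (x0 ^ 2 / (1 - x0)) \<le> sqrt ((m ^ 2) ^ 2 / (1 - m ^ 2))) \<longleftrightarrow> x0 \<le> m ^ 2"
  proof -
    have m2: "0 < m ^ 2" "m ^ 2 < 1" using m by (auto simp: power_less_one_iff)
    have "(x0 ^ 2 / (1 - x0) \<le> (m ^ 2) ^ 2 / (1 - m ^ 2)) \<longleftrightarrow> x0 \<le> m ^ 2"
    proof
      assume h: "x0 ^ 2 / (1 - x0) \<le> (m ^ 2) ^ 2 / (1 - m ^ 2)"
      show "x0 \<le> m ^ 2"
      proof (rule ccontr)
        assume "\<not> x0 \<le> m ^ 2"
        then have "(m ^ 2) ^ 2 / (1 - m ^ 2) < x0 ^ 2 / (1 - x0)"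
          using m2 x0 by (intro sq_mono) auto
        then show False using h by simp
      qed
    next
      assume h: "x0 \<le> m ^ 2"
      show "x0 ^ 2 / (1 - x0) \<le> (m ^ 2) ^ 2 / (1 - m ^ 2)"
      proof (cases "x0 = m ^ 2")
        case False
        then show ?thesis using h m2 x0 sq_mono[of x0 "m ^ 2"] by simp
      qed simp
    qed
    then show ?thesis by simp
  qed
  show ?thesis using s1 s4 unfolding s2 s3 x0_def by blast
qed

lemma powr_k:
  fixes a :: real assumes "0 < a" "k \<ge> 1"
  shows "(a powr (1 / real k)) ^ k = a"
proof -
  have "(a powr (1 / real k)) ^ k = (a powr (1 / real k)) powr real k"
    using assms by (simp add: powr_realpow)
  also have "\<dots> = a" using assms by (simp add: powr_powr)
  finally show ?thesis .
qed

lemma powr_k2: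
  fixes m :: real assumes "0 < m" "k \<ge> 1"
  shows "(m ^ k) powr (1 / real k) = m"
proof -
  have "(m ^ k) powr (1 / real k) = (m powr real k) powr (1 / real k)"
    using assms by (simp add: powr_realpow)
  also have "\<dots> = m" using assms by (simp add: powr_powr)
  finally show ?thesis .
qed



lemma y_bounds:
  fixes p k :: nat assumes "p \<ge> 3"
  shows "0 < (real (max p k) - 2) / (real (max p k) - 1)"
    and "(real (max p k) - 2) / (real (max p k) - 1) < 1"
proof -
  have q3: "real (max p k) \<ge> 3" using assms by simp
  have yr: "\<And>r::real. r \<ge> 3 \<Longrightarrow> (r - 2) / (r - 1) > 0 \<and> (r - 2) / (r - 1) < 1"
    by (simp add: divide_simps)
  show "0 < (real (max p k) - 2) / (real (max p k) - 1)"
    and "(real (max p k) - 2) / (real (max p k) - 1) < 1" using yr[OF q3] by auto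
qed

lemma x0_le_y:
  fixes p k :: nat assumes "p \<ge> 3"
  shows "(real p - 2) / (real p - 1) \<le> (real (max p k) - 2) / (real (max p k) - 1)"
proof (cases "k \<le> p")
  case False
  then have "max p k = k" by simp
  then show ?thesis using False assms by (simp add: divide_simps algebra_simps)
qed simp

lemma Kineq:
  fixes p k :: nat and m :: real
  assumes p: "p \<ge> 3" and k: "k \<ge> 1" and m: "0 < m" "m < 1"
    and x0: "(real p - 2) / (real p - 1) \<le> m ^ 2"
    and mq: "mq = sqrt ((real (max p k) - 2) / (real (max p k) - 1))"
  shows "mq ^ 2 / sqrt (1 - mq ^ 2) / mq ^ k \<le> m ^ 2 / sqrt (1 - m ^ 2) / m ^ k"
proof -
  define y where "y = (real (max p k) - 2) / (real (max p k) - 1)"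
  have y: "0 < y" "y < 1" using y_bounds[OF p, of k] by (auto simp: y_def)
  have mq2: "mq ^ 2 = y" using mq y by (simp add: y_def)
  have mqb: "0 < mq" "mq < 1" using mq y by (auto simp: y_def)
  have m21: "m ^ 2 < 1" using m by (simp add: power_less_one_iff)
  have "y ^ 2 / ((1 - y) * y ^ k) \<le> (m ^ 2) ^ 2 / ((1 - m ^ 2) * (m ^ 2) ^ k)"
    using Q_le[OF p k x0 m21 y_def] .
  then have "sqrt (y ^ 2 / ((1 - y) * y ^ k)) \<le> sqrt ((m ^ 2) ^ 2 / ((1 - m ^ 2) * (m ^ 2) ^ k))"
    by (rule real_sqrt_le_mono)
  then show ?thesis using G_sq[OF m, of k] G_sq[OF mqb, of k] mq2 by simp
qed

theorem lemmaB2: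
  fixes p k :: nat
  assumes "p \<ge> 3" and "k \<ge> 1"
  shows "\<exists>lam2 > 0. \<forall>lam > 0. mstar_defined p k lam \<longrightarrow>
           ((lam < lam2 \<longrightarrow> mstar p k lam < m_lam p k lam) \<and>
            (lam \<ge> lam2 \<longrightarrow> mstar p k lam \<ge> m_lam p k lam))"
proof -
  note p = assms(1) and k = assms(2)
  define sp where "sp = sqrt (real p)"
  define C where "C = (real p - 2) * sqrt (real p) / sqrt (real p - 1)"
  define G where "G = (\<lambda>m::real. m ^ 2 / sqrt (1 - m ^ 2))"
  define y where "y = (real (max p k) - 2) / (real (max p k) - 1)"
  define mq where "mq = sqrt y"
  define lam2 where "lam2 = sp * G mq / mq ^ k"
  have sp: "sp > 0" using p by (simp add: sp_def)
  have Cpos: "C > 0" using p by (simp add: C_def)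
  have y: "0 < y" "y < 1" using y_bounds[OF p, of k] by (auto simp: y_def)
  have mq2: "mq ^ 2 = y" using y by (simp add: mq_def)
  have mqb: "0 < mq" "mq < 1" using y by (auto simp: mq_def)
  have Gmq: "G mq > 0" using mqb mq2 y by (simp add: G_def)
  have lam2pos: "lam2 > 0" using sp Gmq mqb by (simp add: lam2_def)
  have mlam: "m_lam p k lam = min 1 ((C / lam) powr (1 / real k))" for lam
    by (simp add: m_lam_def C_def mult.commute)
  have sols: "m \<in> mstar_sols p k lam \<longleftrightarrow> 0 < m \<and> m < 1 \<and> lam * m ^ k / sp = G m" for m lam
    by (simp add: mstar_sols_def sp_def G_def)
  have x0y: "(real p - 2) / (real p - 1) \<le> mq ^ 2" using x0_le_y[OF p, of k] mq2 by (simp add: y_def)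
  have CmqG: "C \<le> sp * G mq" using Cthr[OF p mqb] x0y by (simp add: C_def sp_def G_def)
  show ?thesis
  proof (intro exI[of _ lam2] conjI allI impI lam2pos)
    fix lam :: real
    assume lam: "lam > 0" and def: "mstar_defined p k lam"
    then obtain ms where ms: "ms \<in> mstar_sols p k lam" and msmax: "\<And>m'. m' \<in> mstar_sols p k lam \<Longrightarrow> m' \<le> ms"
      unfolding mstar_defined_def by blast
    have mstar: "mstar p k lam = ms"
      unfolding mstar_def using ms msmax by (intro Greatest_equality) auto
    have msb: "0 < ms" "ms < 1" and mseq: "lam * ms ^ k / sp = G ms" using ms sols by auto
    {
      assume lt: "lam < lam2"
      show "mstar p k lam < m_lam p k lam"
      proof (rule ccontr)
        assume "\<not> mstar p k lam < m_lam p k lam"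
        then have t: "(C / lam) powr (1 / real k) \<le> ms" using msb mstar mlam[of lam] by (auto simp: not_less)
        have "C / lam \<le> ms ^ k"
        proof -
          have "((C / lam) powr (1 / real k)) ^ k \<le> ms ^ k"
            using t by (intro power_mono) auto
          then show ?thesis using powr_k[of "C / lam" k] Cpos lam k by simp
        qed
        then have "C \<le> lam * ms ^ k" using lam by (simp add: field_simps)
        also have "lam * ms ^ k = sp * G ms" using mseq sp by (simp add: field_simps)
        finally have "C \<le> sp * G ms" .
        then have "(real p - 2) / (real p - 1) \<le> ms ^ 2"
          using Cthr[OF p msb] by (simp add: C_def sp_def G_def)
        then have "G mq / mq ^ k \<le> G ms / ms ^ k"
          using Kineq[OF p k msb _ mq_def[unfolded y_def]] by (simp add: G_def)
        also have "G ms / ms ^ k = lam / sp" using mseq sp msb by (simp add: field_simps)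
        finally have "lam2 \<le> lam" using sp by (simp add: lam2_def field_simps)
        then show False using lt by simp
      qed
    }
    {
      assume ge: "lam2 \<le> lam"
      define L where "L = lam / sp"
      have Lpos: "L > 0" using lam sp by (simp add: L_def)
      define d where "d = (1 - y) / (2 * (L + 1))"
      have d: "0 < d" "d \<le> (1 - y) / 2" using y Lpos by (auto simp: d_def field_simps)
      have d1: "d < 1" using d y by simp
      define b where "b = sqrt (1 - d ^ 2)"
      have d2: "d ^ 2 \<le> d" using d d1 by (simp add: power2_eq_square mult_le_cancel_left1)
      have b2: "b ^ 2 = 1 - d ^ 2" using d d1 by (simp add: b_def power_le_one)
      have bb: "0 < b" "b < 1" using d d1 by (auto simp: b_def power_le_one power_less_one_iff)
      have mqb_le: "mq \<le> b" unfolding mq_def b_def using d d2 by (intro real_sqrt_le_mono) simp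
      define phi where "phi = (\<lambda>m. lam * m ^ k / sp - m ^ 2 / sqrt (1 - m ^ 2))"
      have phimq: "0 \<le> phi mq"
      proof -
        have "G mq = lam2 * mq ^ k / sp" using sp mqb by (simp add: lam2_def field_simps)
        also have "\<dots> \<le> lam * mq ^ k / sp" using ge sp mqb
          by (intro divide_right_mono mult_right_mono) auto
        finally show ?thesis by (simp add: phi_def G_def)
      qed
      have phib: "phi b \<le> 0"
      proof -
        have "sqrt (1 - b ^ 2) = d" using b2 d by simp
        then have Gb: "b ^ 2 / sqrt (1 - b ^ 2) = (1 - d ^ 2) / d" using b2 by simp
        have "(1 - d ^ 2) / d \<ge> L + 1"
        proof -
          have "1 - d ^ 2 \<ge> 1 / 2" using d d2 y by simp
          moreover have "d \<le> 1 / (2 * (L + 1))" using y Lpos d by (simp add: d_def divide_simps)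
          ultimately have "(1 / 2) / (1 / (2 * (L + 1))) \<le> (1 - d ^ 2) / d"
            using d by (intro frac_le) auto
          moreover have "(1 / 2) / (1 / (2 * (L + 1))) = L + 1" using Lpos by (simp add: field_simps)
          ultimately show ?thesis by metis
        qed
        moreover have "lam * b ^ k / sp \<le> L"
        proof -
          have "b ^ k \<le> 1" using bb by (simp add: power_le_one)
          then have "lam * b ^ k \<le> lam" using lam by (simp add: mult_le_cancel_left1)
          then show ?thesis using sp by (simp add: L_def divide_right_mono)
        qed
        ultimately show ?thesis unfolding phi_def using Gb by simp
      qed
      have cont: "continuous_on {mq..b} phi"
      proof -
        have "\<forall>x\<in>{mq..b}. sqrt (1 - x ^ 2) \<noteq> 0"
        proof
          fix x assume x: "x \<in> {mq..b}"
          then have "0 < x" "x < 1" using mqb bb by auto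
          then have "x ^ 2 < 1" by (simp add: power_less_one_iff)
          then show "sqrt (1 - x ^ 2) \<noteq> 0" by simp
        qed
        then show ?thesis unfolding phi_def using sp by (intro continuous_intros) auto
      qed
      obtain r where r: "mq \<le> r" "r \<le> b" "phi r = 0"
        using IVT2'[of phi b 0 mq, OF phib phimq mqb_le cont] by blast
      have "r \<in> mstar_sols p k lam"
        using r mqb bb unfolding sols by (simp add: phi_def G_def)
      then have rms: "r \<le> ms" by (rule msmax)
      have "C \<le> lam * mq ^ k"
      proof -
        have "sp * G mq = lam2 * mq ^ k" using sp mqb by (simp add: lam2_def field_simps)
        also have "\<dots> \<le> lam * mq ^ k" using ge mqb by (intro mult_right_mono) auto
        finally show ?thesis using CmqG by simp
      qed
      then have "C / lam \<le> mq ^ k" using lam by (simp add: field_simps)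
      then have "(C / lam) powr (1 / real k) \<le> (mq ^ k) powr (1 / real k)"
        using Cpos lam by (intro powr_mono2) auto
      then have "(C / lam) powr (1 / real k) \<le> mq" using powr_k2[OF mqb(1) k] by simp
      then have "m_lam p k lam \<le> mq" unfolding mlam by linarith
      then show "m_lam p k lam \<le> mstar p k lam" using r rms mstar by simp
    }
  qed
qed

end
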